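(* If a linear operator $T$ is compact on $L^2(\mathbb{R}^{n_1}\times\mathbb{R}^{n_2})$, then it satisfies the product weak compactness property: for every $R>0$, $$\lim_{z\to\infty}\sup_{w\in D(z_1,R)\times D(z_2,R)}|\langle T\psi_z,\psi_w\rangle|=0.$$
   Context: $\mathbb{R}^{n+1}_+=\mathbb{R}^n\times(0,\infty)$ is the $ax+b$ group with $(x,t)*(y,s)=(ty+x,ts)$ and hyperbolic (left-invariant Riemannian) metric $d$ given by $ds^2=(dx^2+dt^2)/t^2$; $D(z,R)$ is the $d$-ball of radius $R$ about $z$. For $z=(x,t)$ and $f$ on $\mathbb{R}^n$, $f_z=t^{-n/2}f((\cdot-x)/t)$. A real-valued $\psi\in\mathcal{D}(\mathbb{R}^n)$ (for $n=n_1,n_2$) is fixed with $\mathrm{supp}\,\psi\subseteq B(0,1)$, $\int\psi=0$, and $\int_0^\infty|\widehat\psi(t\xi)|^2\,dt/t=1$ for $\xi\neq0$. For $z=(z_1,z_2)\in\mathbb{R}^{n_1+1}_+\times\mathbb{R}^{n_2+1}_+$, $\psi_z=\psi_{z_1}\otimes\psi_{z_2}$, $(f_1\otimes f_2)(x_1,x_2)=f_1(x_1)f_2(x_2)$. "$z\to\infty$" means $z$ leaves $D((0,1),R')\times D((0,1),R')$ for every $R'>0$, i.e. $\lim_{R'\to\infty}\sup$ over $z$ outside that set. *)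

theory Defs
  imports "HOL-Analysis.Analysis"
begin

definition upper_half :: "('a::euclidean_space \<times> real) set" where
  "upper_half = {z. snd z > 0}"

text \<open>Hyperbolic distance of the metric (dx^2+dt^2)/t^2 (closed form).\<close>
definition hdist :: "('a::euclidean_space \<times> real) \<Rightarrow> ('a \<times> real) \<Rightarrow> real" where
  "hdist z w = arcosh (1 + ((norm (fst z - fst w))\<^sup>2 + (snd z - snd w)\<^sup>2)
                            / (2 * snd z * snd w))"

definition hball :: "('a::euclidean_space \<times> real) \<Rightarrow> real \<Rightarrow> ('a \<times> real) set" where
  "hball z R = {w \<in> upper_half. hdist z w < R}"

definition dil :: "('a::euclidean_space \<times> real) \<Rightarrow> ('a \<Rightarrow> real) \<Rightarrow> 'a \<Rightarrow> real" where
  "dil z f y = snd z powr (- real DIM('a) / 2) * f ((1 / snd z) *\<^sub>R (y - fst z))"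

definition tensor :: "('a \<Rightarrow> real) \<Rightarrow> ('b \<Rightarrow> real) \<Rightarrow> ('a \<times> 'b) \<Rightarrow> complex" where
  "tensor f g y = complex_of_real (f (fst y) * g (snd y))"

text \<open>C-infinity: all partial derivatives of all orders exist and are continuous.\<close>
coinductive smooth_real :: "('a::euclidean_space \<Rightarrow> real) \<Rightarrow> bool" where
  "continuous_on UNIV f \<Longrightarrow>
   (\<forall>i\<in>Basis. \<exists>g. smooth_real g \<and>
       (\<forall>x. ((\<lambda>s. f (x + s *\<^sub>R i)) has_real_derivative g x) (at 0)))
   \<Longrightarrow> smooth_real f"

definition fourier :: "('a::euclidean_space \<Rightarrow> real) \<Rightarrow> 'a \<Rightarrow> complex" where
  "fourier f \<xi> = (\<integral>x. complex_of_real (f x) * exp (- (2 * pi * \<i>) * complex_of_real (x \<bullet> \<xi>)) \<partial>lborel)"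

definition admissible_wavelet :: "('a::euclidean_space \<Rightarrow> real) \<Rightarrow> bool" where
  "admissible_wavelet \<psi> \<longleftrightarrow>
     smooth_real \<psi> \<and> closure {x. \<psi> x \<noteq> 0} \<subseteq> ball 0 1 \<and>
     integrable lborel \<psi> \<and> (\<integral>x. \<psi> x \<partial>lborel) = 0 \<and>
     (\<forall>\<xi>. \<xi> \<noteq> 0 \<longrightarrow>
        (\<integral>\<^sup>+ t\<in>{0<..}. ennreal ((cmod (fourier \<psi> (t *\<^sub>R \<xi>)))\<^sup>2 / t) \<partial>lborel) = 1)"

text \<open>L^2(R^{n1} x R^{n2}) (complex valued), represented by functions.\<close>
definition L2 :: "('c::euclidean_space \<Rightarrow> complex) set" where
  "L2 = {f. f \<in> borel_measurable lborel \<and> integrable lborel (\<lambda>y. (cmod (f y))\<^sup>2)}"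

definition L2_norm :: "('c::euclidean_space \<Rightarrow> complex) \<Rightarrow> real" where
  "L2_norm f = sqrt (\<integral>y. (cmod (f y))\<^sup>2 \<partial>lborel)"

definition L2_inner :: "('c::euclidean_space \<Rightarrow> complex) \<Rightarrow> ('c \<Rightarrow> complex) \<Rightarrow> complex" where
  "L2_inner f g = (\<integral>y. f y * cnj (g y) \<partial>lborel)"

definition linear_L2 :: "(('c::euclidean_space \<Rightarrow> complex) \<Rightarrow> ('c \<Rightarrow> complex)) \<Rightarrow> bool" where
  "linear_L2 T \<longleftrightarrow> (\<forall>f\<in>L2. T f \<in> L2) \<and>
     (\<forall>f\<in>L2. \<forall>g\<in>L2. T (\<lambda>y. f y + g y) = (\<lambda>y. T f y + T g y)) \<and>
     (\<forall>f\<in>L2. \<forall>c. T (\<lambda>y. c * f y) = (\<lambda>y. c * T f y))"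

definition compact_L2 :: "(('c::euclidean_space \<Rightarrow> complex) \<Rightarrow> ('c \<Rightarrow> complex)) \<Rightarrow> bool" where
  "compact_L2 T \<longleftrightarrow>
     (\<forall>f :: nat \<Rightarrow> 'c \<Rightarrow> complex. (\<forall>k. f k \<in> L2) \<and> (\<exists>B. \<forall>k. L2_norm (f k) \<le> B) \<longrightarrow>
        (\<exists>g\<in>L2. \<exists>r. strict_mono r \<and> (\<lambda>k. L2_norm (\<lambda>y. T (f (r k)) y - g y)) \<longlonglongrightarrow> 0))"

end

theory Submission
  imports Defs
begin


lemma L2D: assumes "f \<in> L2" shows "f \<in> borel_measurable lborel" "integrable lborel (\<lambda>y. (cmod (f y))\<^sup>2)"
  using assms by (auto simp: L2_def)

lemma borel_cnj[measurable]: "(cnj :: complex \<Rightarrow> complex) \<in> borel_measurable borel"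
  by (intro borel_measurable_continuous_onI continuous_intros)

lemma L2_norm_nonneg: "L2_norm f \<ge> 0" by (simp add: L2_norm_def)

lemma L2_norm_sq: "(L2_norm f)\<^sup>2 = (\<integral>y. (cmod (f y))\<^sup>2 \<partial>lborel)"
  unfolding L2_norm_def by (simp add: integral_nonneg_AE)

lemma L2_prod_integrable:
  assumes "f \<in> L2" "g \<in> L2"
  shows "integrable lborel (\<lambda>y. cmod (f y) * cmod (g y))"
proof (rule Bochner_Integration.integrable_bound)
  show "integrable lborel (\<lambda>y. ((cmod (f y))\<^sup>2 + (cmod (g y))\<^sup>2) / 2)"
    using L2D[OF assms(1)] L2D[OF assms(2)] by auto
  show "(\<lambda>y. cmod (f y) * cmod (g y)) \<in> borel_measurable lborel"
    using L2D[OF assms(1)] L2D[OF assms(2)] by measurable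
  show "AE y in lborel. norm (cmod (f y) * cmod (g y)) \<le> norm (((cmod (f y))\<^sup>2 + (cmod (g y))\<^sup>2) / 2)"
  proof (rule AE_I2)
    fix y
    have "0 \<le> (cmod (f y) - cmod (g y))\<^sup>2" by simp
    then show "norm (cmod (f y) * cmod (g y)) \<le> norm (((cmod (f y))\<^sup>2 + (cmod (g y))\<^sup>2) / 2)"
      by (simp add: power2_eq_square algebra_simps)
  qed
qed

lemma L2_inner_integrable:
  assumes "f \<in> L2" "g \<in> L2"
  shows "integrable lborel (\<lambda>y. f y * cnj (g y))"
proof -
  have "integrable lborel (\<lambda>y. norm (f y * cnj (g y)))"
    using L2_prod_integrable[OF assms] by (simp add: norm_mult)
  moreover have "(\<lambda>y. f y * cnj (g y)) \<in> borel_measurable lborel"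
    using L2D[OF assms(1)] L2D[OF assms(2)] by measurable
  ultimately show ?thesis using integrable_norm_iff by blast
qed

lemma CS_abs:
  assumes "f \<in> L2" "g \<in> L2"
  shows "(\<integral>y. cmod (f y) * cmod (g y) \<partial>lborel) \<le> L2_norm f * L2_norm g"
proof -
  define F where "F = (\<integral>y. (cmod (f y))\<^sup>2 \<partial>lborel)"
  define G where "G = (\<integral>y. (cmod (g y))\<^sup>2 \<partial>lborel)"
  define I where "I = (\<integral>y. cmod (f y) * cmod (g y) \<partial>lborel)"
  have F0: "F \<ge> 0" "G \<ge> 0" unfolding F_def G_def by (auto intro: integral_nonneg_AE)
  have key: "I \<le> (a * F + G / a) / 2" if a: "a > 0" for a
  proof -
    have "I \<le> (\<integral>y. (a * (cmod (f y))\<^sup>2 + (cmod (g y))\<^sup>2 / a) / 2 \<partial>lborel)"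
      unfolding I_def
    proof (rule integral_mono)
      show "integrable lborel (\<lambda>y. cmod (f y) * cmod (g y))" by (rule L2_prod_integrable[OF assms])
      show "integrable lborel (\<lambda>y. (a * (cmod (f y))\<^sup>2 + (cmod (g y))\<^sup>2 / a) / 2)"
        using L2D[OF assms(1)] L2D[OF assms(2)] by auto
      fix y
      have "0 \<le> (a * cmod (f y) - cmod (g y))\<^sup>2 / a" using a by simp
      also have "\<dots> = a * (cmod (f y))\<^sup>2 - 2 * cmod (f y) * cmod (g y) + (cmod (g y))\<^sup>2 / a"
        using a by (simp add: power2_eq_square field_simps)
      finally show "cmod (f y) * cmod (g y) \<le> (a * (cmod (f y))\<^sup>2 + (cmod (g y))\<^sup>2 / a) / 2"
        by simp
    qed
    also have "\<dots> = (a * F + G / a) / 2"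
      unfolding F_def G_def using L2D[OF assms(1)] L2D[OF assms(2)] by simp
    finally show ?thesis .
  qed
  have "I \<le> sqrt F * sqrt G"
  proof (cases "F = 0 \<or> G = 0")
    case True
    have "I \<le> e" if e: "e > 0" for e
    proof (cases "F = 0")
      case True
      have "I \<le> ((G+1) / e * F + G / ((G+1) / e)) / 2" using e F0 by (intro key) auto
      also have "\<dots> = G * e / (2 * (G+1))" using True e F0 by (simp add: field_simps)
      also have "\<dots> \<le> e" using True e F0 by (simp add: field_simps)
      finally show ?thesis .
    next
      case False
      then have "G = 0" using \<open>F = 0 \<or> G = 0\<close> by auto
      have "I \<le> ((e / (F+1)) * F + G / (e / (F+1))) / 2" using e F0 by (intro key) auto
      also have "\<dots> \<le> e" using \<open>G = 0\<close> e F0 by (simp add: field_simps)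
      finally show ?thesis .
    qed
    then have "I \<le> 0" by (meson dense not_le)
    then show ?thesis using True by auto
  next
    case False
    then have Fp: "F > 0" "G > 0" using F0 by auto
    have "I \<le> ((sqrt G / sqrt F) * F + G / (sqrt G / sqrt F)) / 2" using Fp by (intro key) auto
    also have "\<dots> = sqrt F * sqrt G"
      using Fp by (simp add: field_simps)
    finally show ?thesis .
  qed
  then show ?thesis unfolding I_def F_def G_def L2_norm_def .
qed

lemma L2_add: assumes "f \<in> L2" "g \<in> L2" shows "(\<lambda>y. f y + g y) \<in> L2"
proof -
  have "integrable lborel (\<lambda>y. (cmod (f y + g y))\<^sup>2)"
  proof (rule Bochner_Integration.integrable_bound)
    show "integrable lborel (\<lambda>y. 2 * (cmod (f y))\<^sup>2 + 2 * (cmod (g y))\<^sup>2)"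
      using L2D[OF assms(1)] L2D[OF assms(2)] by auto
    show "(\<lambda>y. (cmod (f y + g y))\<^sup>2) \<in> borel_measurable lborel"
      using L2D[OF assms(1)] L2D[OF assms(2)] by measurable
    show "AE y in lborel. norm ((cmod (f y + g y))\<^sup>2) \<le> norm (2 * (cmod (f y))\<^sup>2 + 2 * (cmod (g y))\<^sup>2)"
    proof (rule AE_I2)
      fix y
      have "cmod (f y + g y) \<le> cmod (f y) + cmod (g y)" by (rule norm_triangle_ineq)
      then have "(cmod (f y + g y))\<^sup>2 \<le> (cmod (f y) + cmod (g y))\<^sup>2"
        by (intro power_mono) auto
      also have "\<dots> \<le> 2 * (cmod (f y))\<^sup>2 + 2 * (cmod (g y))\<^sup>2"
        using sum_squares_ge_zero[of "cmod (f y) - cmod (g y)" 0] 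
        by (simp add: power2_eq_square algebra_simps)
      finally show "norm ((cmod (f y + g y))\<^sup>2) \<le> norm (2 * (cmod (f y))\<^sup>2 + 2 * (cmod (g y))\<^sup>2)"
        by simp
    qed
  qed
  moreover have "(\<lambda>y. f y + g y) \<in> borel_measurable lborel"
    using L2D[OF assms(1)] L2D[OF assms(2)] by measurable
  ultimately show ?thesis by (simp add: L2_def)
qed

lemma L2_scale: assumes "f \<in> L2" shows "(\<lambda>y. c * f y) \<in> L2"
proof -
  have "integrable lborel (\<lambda>y. (cmod c)\<^sup>2 * (cmod (f y))\<^sup>2)"
    using L2D[OF assms(1)] by auto
  moreover have "(\<lambda>y. c * f y) \<in> borel_measurable lborel"
    using L2D[OF assms(1)] by measurable
  ultimately show ?thesis by (simp add: L2_def norm_mult power_mult_distrib)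
qed

lemma L2_zero: "(\<lambda>y. 0) \<in> L2" by (simp add: L2_def)

lemma L2_diff: assumes "f \<in> L2" "g \<in> L2" shows "(\<lambda>y. f y - g y) \<in> L2"
  using L2_add[OF assms(1) L2_scale[OF assms(2), of "-1"]] by simp

lemma L2_sum: assumes "finite S" "\<And>i. i \<in> S \<Longrightarrow> f i \<in> L2" shows "(\<lambda>y. \<Sum>i\<in>S. f i y) \<in> L2"
  using assms by (induction S rule: finite_induct) (auto simp: L2_zero intro!: L2_add)

lemma L2_norm_scale: assumes "f \<in> L2" shows "L2_norm (\<lambda>y. c * f y) = cmod c * L2_norm f"
proof -
  have "(\<integral>y. (cmod (c * f y))\<^sup>2 \<partial>lborel) = (cmod c)\<^sup>2 * (\<integral>y. (cmod (f y))\<^sup>2 \<partial>lborel)"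
    by (simp add: norm_mult power_mult_distrib)
  then show ?thesis unfolding L2_norm_def by (simp add: real_sqrt_mult)
qed

lemma L2_norm_triangle: assumes "f \<in> L2" "g \<in> L2"
  shows "L2_norm (\<lambda>y. f y + g y) \<le> L2_norm f + L2_norm g"
proof -
  have "(L2_norm (\<lambda>y. f y + g y))\<^sup>2 \<le> (\<integral>y. (cmod (f y))\<^sup>2 + 2 * (cmod (f y) * cmod (g y)) + (cmod (g y))\<^sup>2 \<partial>lborel)"
    unfolding L2_norm_sq
  proof (rule integral_mono)
    show "integrable lborel (\<lambda>y. (cmod (f y + g y))\<^sup>2)" using L2D(2)[OF L2_add[OF assms]] .
    show "integrable lborel (\<lambda>y. (cmod (f y))\<^sup>2 + 2 * (cmod (f y) * cmod (g y)) + (cmod (g y))\<^sup>2)"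
      using L2D[OF assms(1)] L2D[OF assms(2)] L2_prod_integrable[OF assms] by auto
    fix y
    have "cmod (f y + g y) \<le> cmod (f y) + cmod (g y)" by (rule norm_triangle_ineq)
    then have "(cmod (f y + g y))\<^sup>2 \<le> (cmod (f y) + cmod (g y))\<^sup>2"
      by (intro power_mono) auto
    then show "(cmod (f y + g y))\<^sup>2 \<le> (cmod (f y))\<^sup>2 + 2 * (cmod (f y) * cmod (g y)) + (cmod (g y))\<^sup>2"
      by (simp add: power2_eq_square algebra_simps)
  qed
  also have "\<dots> = (L2_norm f)\<^sup>2 + 2 * (\<integral>y. cmod (f y) * cmod (g y) \<partial>lborel) + (L2_norm g)\<^sup>2"
    unfolding L2_norm_sq
    using L2D[OF assms(1)] L2D[OF assms(2)] L2_prod_integrable[OF assms] by simp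
  also have "\<dots> \<le> (L2_norm f)\<^sup>2 + 2 * (L2_norm f * L2_norm g) + (L2_norm g)\<^sup>2"
    using CS_abs[OF assms] by simp
  also have "\<dots> = (L2_norm f + L2_norm g)\<^sup>2" by (simp add: power2_eq_square algebra_simps)
  finally show ?thesis
    using L2_norm_nonneg[of f] L2_norm_nonneg[of g] L2_norm_nonneg[of "\<lambda>y. f y + g y"]
    by (meson power2_le_imp_le add_nonneg_nonneg)
qed

lemma L2_norm_sum: assumes "finite S" "\<And>i. i \<in> S \<Longrightarrow> f i \<in> L2"
  shows "L2_norm (\<lambda>y. \<Sum>i\<in>S. f i y) \<le> (\<Sum>i\<in>S. L2_norm (f i))"
  using assms
proof (induction S rule: finite_induct)
  case empty then show ?case by (simp add: L2_norm_def)
next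
  case (insert x F)
  have "L2_norm (\<lambda>y. \<Sum>i\<in>insert x F. f i y) = L2_norm (\<lambda>y. f x y + (\<Sum>i\<in>F. f i y))"
    using insert by simp
  also have "\<dots> \<le> L2_norm (f x) + L2_norm (\<lambda>y. \<Sum>i\<in>F. f i y)"
    using insert by (intro L2_norm_triangle L2_sum) auto
  also have "\<dots> \<le> L2_norm (f x) + (\<Sum>i\<in>F. L2_norm (f i))" using insert by simp
  finally show ?case using insert by simp
qed

lemma L2_inner_bound: assumes "f \<in> L2" "g \<in> L2"
  shows "cmod (L2_inner f g) \<le> L2_norm f * L2_norm g"
proof -
  have "cmod (L2_inner f g) \<le> (\<integral>y. cmod (f y * cnj (g y)) \<partial>lborel)"
    unfolding L2_inner_def by (rule integral_norm_bound)
  also have "\<dots> = (\<integral>y. cmod (f y) * cmod (g y) \<partial>lborel)" by (simp add: norm_mult)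
  also have "\<dots> \<le> L2_norm f * L2_norm g" by (rule CS_abs[OF assms])
  finally show ?thesis .
qed

lemma L2_inner_diff: assumes "f \<in> L2" "g \<in> L2" "h \<in> L2"
  shows "L2_inner f h = L2_inner (\<lambda>y. f y - g y) h + L2_inner g h"
proof -
  have "L2_inner (\<lambda>y. f y - g y) h = L2_inner f h - L2_inner g h"
    unfolding L2_inner_def
    using L2_inner_integrable[OF assms(1,3)] L2_inner_integrable[OF assms(2,3)]
    by (simp add: left_diff_distrib)
  then show ?thesis by simp
qed

lemma L2_norm_le_diff: assumes "f \<in> L2" "g \<in> L2"
  shows "L2_norm f \<le> L2_norm (\<lambda>y. f y - g y) + L2_norm g"
  using L2_norm_triangle[OF L2_diff[OF assms] assms(2)] by simp

lemma T_zero: assumes "linear_L2 T" shows "T (\<lambda>y. 0) = (\<lambda>y. 0)"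
proof -
  have h: "\<forall>f\<in>L2. \<forall>c. T (\<lambda>y. c * f y) = (\<lambda>y. c * T f y)"
    using assms unfolding linear_L2_def by blast
  from h[rule_format, OF L2_zero, of 0] show ?thesis by simp
qed

lemma T_sum: assumes "linear_L2 T" "finite S" "\<And>i. i \<in> S \<Longrightarrow> f i \<in> L2"
  shows "T (\<lambda>y. \<Sum>i\<in>S. f i y) = (\<lambda>y. \<Sum>i\<in>S. T (f i) y)"
  using assms(2,3)
proof (induction S rule: finite_induct)
  case empty then show ?case using T_zero[OF assms(1)] by simp
next
  case (insert x F)
  have "T (\<lambda>y. \<Sum>i\<in>insert x F. f i y) = T (\<lambda>y. f x y + (\<Sum>i\<in>F. f i y))"
    using insert by simp
  also have "\<dots> = (\<lambda>y. T (f x) y + T (\<lambda>y. \<Sum>i\<in>F. f i y) y)"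
    using assms(1) insert L2_sum[of F f] unfolding linear_L2_def by auto
  finally show ?case using insert by simp
qed

lemma T_bounded: assumes "linear_L2 T" "compact_L2 T"
  shows "\<exists>C\<ge>0. \<forall>f\<in>L2. L2_norm (T f) \<le> C * L2_norm f"
proof (rule ccontr)
  assume "\<not> ?thesis"
  then have nb: "\<And>C. C \<ge> 0 \<Longrightarrow> \<exists>f\<in>L2. L2_norm (T f) > C * L2_norm f"
    by (meson not_le)
  have TL: "\<And>f. f \<in> L2 \<Longrightarrow> T f \<in> L2" and TS: "\<And>f c. f \<in> L2 \<Longrightarrow> T (\<lambda>y. c * f y) = (\<lambda>y. c * T f y)"
    using assms(1) unfolding linear_L2_def by auto
  have "\<exists>h\<in>L2. L2_norm h \<le> 1 \<and> L2_norm (T h) \<ge> real k" for k :: nat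
  proof -
    obtain f where f: "f \<in> L2" "L2_norm (T f) > real k * L2_norm f" using nb[of "real k"] by auto
    show ?thesis
    proof (cases "L2_norm f > 0")
      case True
      define c where "c = complex_of_real (1 / L2_norm f)"
      have "cmod c = 1 / L2_norm f" unfolding c_def norm_of_real using True by simp
      then have "L2_norm (\<lambda>y. c * f y) = 1" "L2_norm (T (\<lambda>y. c * f y)) = L2_norm (T f) / L2_norm f"
        using True f TL[OF f(1)] by (auto simp: L2_norm_scale TS)
      moreover have "L2_norm (T f) / L2_norm f \<ge> real k" using f True by (simp add: field_simps)
      ultimately show ?thesis using L2_scale[OF f(1), of c] by (intro bexI[of _ "\<lambda>y. c * f y"]) auto
    next
      case False
      then have f0: "L2_norm f = 0" using L2_norm_nonneg[of f] by auto
      then have pos: "L2_norm (T f) > 0" using f by simp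
      define c where "c = complex_of_real (real k / L2_norm (T f))"
      have "cmod c = real k / L2_norm (T f)" unfolding c_def norm_of_real using pos by simp
      then have "L2_norm (\<lambda>y. c * f y) = 0" "L2_norm (T (\<lambda>y. c * f y)) = real k"
        using pos f0 f TL[OF f(1)] by (auto simp: L2_norm_scale TS)
      then show ?thesis using L2_scale[OF f(1), of c] by (intro bexI[of _ "\<lambda>y. c * f y"]) auto
    qed
  qed
  then obtain h where h: "\<And>k. h k \<in> L2" "\<And>k. L2_norm (h k) \<le> 1" "\<And>k. L2_norm (T (h k)) \<ge> real k"
    by metis
  have "(\<forall>k. h k \<in> L2) \<and> (\<exists>B. \<forall>k. L2_norm (h k) \<le> B)" using h by blast
  from assms(2)[unfolded compact_L2_def, rule_format, OF this]
  obtain g r where g: "g \<in> L2" "strict_mono r" "(\<lambda>k. L2_norm (\<lambda>y. T (h (r k)) y - g y)) \<longlonglongrightarrow> 0"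
    by blast
  from g(3) have "eventually (\<lambda>k. L2_norm (\<lambda>y. T (h (r k)) y - g y) < 1) sequentially"
    by (rule order_tendstoD) simp
  then obtain K where K: "\<And>k. k \<ge> K \<Longrightarrow> L2_norm (\<lambda>y. T (h (r k)) y - g y) < 1"
    by (auto simp: eventually_sequentially)
  obtain n :: nat where n: "real n > 1 + L2_norm g" using reals_Archimedean2 by blast
  define k where "k = max K n"
  have k: "k \<ge> K" "real k > 1 + L2_norm g" using n unfolding k_def by (auto simp: less_le_trans)
  have "real k \<le> real (r k)" using seq_suble[OF g(2)] by simp
  also have "\<dots> \<le> L2_norm (T (h (r k)))" by (rule h(3))
  also have "\<dots> \<le> L2_norm (\<lambda>y. T (h (r k)) y - g y) + L2_norm g"
    by (rule L2_norm_le_diff[OF TL[OF h(1)] g(1)])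
  also have "\<dots> < 1 + L2_norm g" using K[OF k(1)] by simp
  finally show False using k by simp
qed



lemma wavelet_cont: "admissible_wavelet \<psi> \<Longrightarrow> continuous_on UNIV \<psi>"
proof -
  assume "admissible_wavelet \<psi>"
  then have "smooth_real \<psi>" unfolding admissible_wavelet_def by (elim conjE)
  then show ?thesis by (rule smooth_real.cases) simp
qed

lemma wavelet_supp: assumes "admissible_wavelet \<psi>" "\<psi> y \<noteq> 0" shows "norm y < 1"
proof -
  have "y \<in> closure {x. \<psi> x \<noteq> 0}" using assms(2) by (intro subsetD[OF closure_subset]) simp
  moreover have "closure {x. \<psi> x \<noteq> 0} \<subseteq> ball 0 1"
    using assms(1) unfolding admissible_wavelet_def by (elim conjE)
  ultimately show ?thesis by (auto simp: dist_norm)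
qed

lemma wavelet_bound: assumes "admissible_wavelet \<psi>" obtains B where "B \<ge> 0" "\<And>y. \<bar>\<psi> y\<bar> \<le> B"
proof -
  have "compact (\<psi> ` cball 0 1)"
    using wavelet_cont[OF assms] by (intro compact_continuous_image) (auto intro: continuous_on_subset)
  then obtain B where B: "B > 0" "\<And>u. u \<in> \<psi> ` cball 0 1 \<Longrightarrow> norm u \<le> B"
    using compact_imp_bounded[OF \<open>compact (\<psi> ` cball 0 1)\<close>] unfolding bounded_pos by blast
  have "\<bar>\<psi> y\<bar> \<le> B" for y
  proof (cases "\<psi> y = 0")
    case True then show ?thesis using B by simp
  next
    case False
    then have "norm y < 1" by (rule wavelet_supp[OF assms])
    then have "y \<in> cball 0 1" by simp
    then show ?thesis using B(2)[of "\<psi> y"] by auto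
  qed
  then show ?thesis using that[of B] B(1) by simp
qed

lemma dil_cont: assumes "continuous_on UNIV \<psi>" shows "continuous_on UNIV (dil z \<psi>)"
  unfolding dil_def
  by (intro continuous_intros continuous_on_compose2[OF assms]) auto

lemma dil_bound:
  fixes \<psi> :: "'a::euclidean_space \<Rightarrow> real"
  assumes "admissible_wavelet \<psi>" "\<And>y. \<bar>\<psi> y\<bar> \<le> B" "snd z > 0"
  shows "\<bar>dil z \<psi> y\<bar> \<le> snd z powr (- real DIM('a) / 2) * B * indicator (ball (fst z) (snd z)) y"
    (is "_ \<le> ?c * B * _")
proof (cases "\<psi> ((1 / snd z) *\<^sub>R (y - fst z)) = 0")
  case True
  have "B \<ge> 0" using order_trans[OF abs_ge_zero assms(2)] .
  then show ?thesis using True by (simp add: dil_def)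
next
  case False
  then have "norm ((1 / snd z) *\<^sub>R (y - fst z)) < 1" by (rule wavelet_supp[OF assms(1)])
  then have "norm (y - fst z) / snd z < 1" using assms(3) by (simp add: divide_simps)
  then have "norm (y - fst z) < snd z" using assms(3) by (simp add: divide_simps)
  then have "y \<in> ball (fst z) (snd z)" by (simp add: dist_norm norm_minus_commute)
  moreover have "\<bar>dil z \<psi> y\<bar> = ?c * \<bar>\<psi> ((1 / snd z) *\<^sub>R (y - fst z))\<bar>"
    unfolding dil_def by (simp add: abs_mult)
  ultimately show ?thesis using assms(2) by (simp add: mult_left_mono)
qed

lemma measure_lborel_Times:
  fixes A :: "'a::euclidean_space set" and B :: "'b::euclidean_space set"
  assumes "A \<in> sets borel" "B \<in> sets borel" "emeasure lborel A < \<infinity>" "emeasure lborel B < \<infinity>"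
  shows "measure lborel (A \<times> B) = measure lborel A * measure lborel B"
proof -
  have "emeasure (lborel :: ('a\<times>'b) measure) (A \<times> B) = emeasure (lborel \<Otimes>\<^sub>M lborel) (A \<times> B)"
    by (simp add: lborel_prod)
  also have "\<dots> = emeasure lborel A * emeasure lborel B"
    using assms by (intro lborel.emeasure_pair_measure_Times) auto
  finally show ?thesis unfolding measure_def by (simp add: enn2real_mult)
qed

definition Qf :: "('a::euclidean_space \<times> real) \<Rightarrow> ('a \<times> real) \<Rightarrow> real" where
  "Qf z w = (snd z * snd w) powr (- real DIM('a) / 2) *
     measure lborel (ball (fst z) (snd z) \<inter> ball (fst w) (snd w))"

lemma prod4_mono: fixes a1 a2 a3 a4 b1 b2 b3 b4 :: real
  assumes "0 \<le> a1" "0 \<le> a2" "0 \<le> a3" "0 \<le> a4" "a1 \<le> b1" "a2 \<le> b2" "a3 \<le> b3" "a4 \<le> b4"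
  shows "a1 * a2 * a3 * a4 \<le> b1 * b2 * b3 * b4"
  using assms by (intro mult_mono) (auto intro: mult_nonneg_nonneg order_trans)

lemma tensor_cont:
  assumes "continuous_on UNIV f" "continuous_on UNIV g"
  shows "continuous_on UNIV (tensor f g)"
  unfolding tensor_def
  by (intro continuous_intros continuous_on_compose2[OF assms(1)] continuous_on_compose2[OF assms(2)]) auto

lemma pointwise_bound:
  fixes \<psi>1 :: "'a::euclidean_space \<Rightarrow> real" and \<psi>2 :: "'b::euclidean_space \<Rightarrow> real"
  assumes w1: "admissible_wavelet \<psi>1" "\<And>y. \<bar>\<psi>1 y\<bar> \<le> B1"
    and w2: "admissible_wavelet \<psi>2" "\<And>y. \<bar>\<psi>2 y\<bar> \<le> B2"
    and pos: "snd z1 > 0" "snd z2 > 0" "snd w1 > 0" "snd w2 > 0"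
  shows "cmod (tensor (dil z1 \<psi>1) (dil z2 \<psi>2) y) * cmod (tensor (dil w1 \<psi>1) (dil w2 \<psi>2) y)
    \<le> (B1 * B1 * B2 * B2 * (snd z1 * snd w1) powr (- real DIM('a) / 2) * (snd z2 * snd w2) powr (- real DIM('b) / 2))
       * indicator ((ball (fst z1) (snd z1) \<inter> ball (fst w1) (snd w1)) \<times> (ball (fst z2) (snd z2) \<inter> ball (fst w2) (snd w2))) y"
proof -
  have "cmod (tensor (dil z1 \<psi>1) (dil z2 \<psi>2) y) * cmod (tensor (dil w1 \<psi>1) (dil w2 \<psi>2) y)
    = \<bar>dil z1 \<psi>1 (fst y)\<bar> * \<bar>dil w1 \<psi>1 (fst y)\<bar> * \<bar>dil z2 \<psi>2 (snd y)\<bar> * \<bar>dil w2 \<psi>2 (snd y)\<bar>"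
    unfolding tensor_def norm_of_real by (simp add: abs_mult ac_simps del: of_real_mult)
  also have "\<dots> \<le> (snd z1 powr (- real DIM('a) / 2) * B1 * indicator (ball (fst z1) (snd z1)) (fst y))
     * (snd w1 powr (- real DIM('a) / 2) * B1 * indicator (ball (fst w1) (snd w1)) (fst y))
     * (snd z2 powr (- real DIM('b) / 2) * B2 * indicator (ball (fst z2) (snd z2)) (snd y))
     * (snd w2 powr (- real DIM('b) / 2) * B2 * indicator (ball (fst w2) (snd w2)) (snd y))"
    by (intro prod4_mono abs_ge_zero dil_bound w1 w2 pos)
  also have "\<dots> = (B1 * B1 * B2 * B2 * (snd z1 * snd w1) powr (- real DIM('a) / 2) * (snd z2 * snd w2) powr (- real DIM('b) / 2))
       * indicator ((ball (fst z1) (snd z1) \<inter> ball (fst w1) (snd w1)) \<times> (ball (fst z2) (snd z2) \<inter> ball (fst w2) (snd w2))) y"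
    using pos by (simp add: indicator_times indicator_inter_arith powr_mult ac_simps)
  finally show ?thesis .
qed

lemma Phi_meas:
  assumes "admissible_wavelet \<psi>1" "admissible_wavelet \<psi>2"
  shows "tensor (dil z1 \<psi>1) (dil z2 \<psi>2) \<in> borel_measurable lborel"
  using borel_measurable_continuous_onI[OF tensor_cont[OF dil_cont[OF wavelet_cont[OF assms(1)]] dil_cont[OF wavelet_cont[OF assms(2)]]]]
  by simp

lemma A_bound:
  fixes \<psi>1 :: "'a::euclidean_space \<Rightarrow> real" and \<psi>2 :: "'b::euclidean_space \<Rightarrow> real"
  assumes w1: "admissible_wavelet \<psi>1" "\<And>y. \<bar>\<psi>1 y\<bar> \<le> B1"
    and w2: "admissible_wavelet \<psi>2" "\<And>y. \<bar>\<psi>2 y\<bar> \<le> B2"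
    and pos: "snd z1 > 0" "snd z2 > 0" "snd w1 > 0" "snd w2 > 0"
  shows "integrable lborel (\<lambda>y. cmod (tensor (dil z1 \<psi>1) (dil z2 \<psi>2) y) * cmod (tensor (dil w1 \<psi>1) (dil w2 \<psi>2) y))"
    and "(\<integral>y. cmod (tensor (dil z1 \<psi>1) (dil z2 \<psi>2) y) * cmod (tensor (dil w1 \<psi>1) (dil w2 \<psi>2) y) \<partial>lborel)
         \<le> B1 * B1 * B2 * B2 * Qf z1 w1 * Qf z2 w2"
proof -
  define P1 where "P1 = ball (fst z1) (snd z1) \<inter> ball (fst w1) (snd w1)"
  define P2 where "P2 = ball (fst z2) (snd z2) \<inter> ball (fst w2) (snd w2)"
  define K where "K = B1 * B1 * B2 * B2 * (snd z1 * snd w1) powr (- real DIM('a) / 2) * (snd z2 * snd w2) powr (- real DIM('b) / 2)"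
  have B0: "B1 \<ge> 0" "B2 \<ge> 0" using order_trans[OF abs_ge_zero w1(2)] order_trans[OF abs_ge_zero w2(2)] by auto
  have K0: "K \<ge> 0" unfolding K_def using B0 by simp
  have fin1: "emeasure lborel P1 < \<infinity>" unfolding P1_def by (intro emeasure_bounded_finite) auto
  have fin2: "emeasure lborel P2 < \<infinity>" unfolding P2_def by (intro emeasure_bounded_finite) auto
  have fin: "emeasure lborel (P1 \<times> P2) < \<infinity>" unfolding P1_def P2_def
    by (intro emeasure_bounded_finite bounded_Times) auto
  have P1s: "P1 \<in> sets borel" "P2 \<in> sets borel" "P1 \<times> P2 \<in> sets borel"
    unfolding P1_def P2_def by (auto intro!: borel_open open_Times)
  have intK: "integrable lborel (\<lambda>y. K * indicator (P1 \<times> P2) y)"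
    using fin P1s by (intro integrable_mult_right integrable_real_indicator) auto
  have pb: "cmod (tensor (dil z1 \<psi>1) (dil z2 \<psi>2) y) * cmod (tensor (dil w1 \<psi>1) (dil w2 \<psi>2) y)
    \<le> K * indicator (P1 \<times> P2) y" for y
    unfolding K_def P1_def P2_def by (rule pointwise_bound[OF w1 w2 pos])
  have meas: "(\<lambda>y. cmod (tensor (dil z1 \<psi>1) (dil z2 \<psi>2) y) * cmod (tensor (dil w1 \<psi>1) (dil w2 \<psi>2) y)) \<in> borel_measurable lborel"
    using Phi_meas[OF w1(1) w2(1), of z1 z2] Phi_meas[OF w1(1) w2(1), of w1 w2] by measurable
  show int: "integrable lborel (\<lambda>y. cmod (tensor (dil z1 \<psi>1) (dil z2 \<psi>2) y) * cmod (tensor (dil w1 \<psi>1) (dil w2 \<psi>2) y))"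
  proof (rule Bochner_Integration.integrable_bound[OF intK meas], rule AE_I2)
    fix y
    have "cmod (tensor (dil z1 \<psi>1) (dil z2 \<psi>2) y) * cmod (tensor (dil w1 \<psi>1) (dil w2 \<psi>2) y) \<le> K * indicator (P1 \<times> P2) y"
      by (rule pb)
    also have "\<dots> \<le> norm (K * indicator (P1 \<times> P2) y :: real)" by simp
    finally show "norm (cmod (tensor (dil z1 \<psi>1) (dil z2 \<psi>2) y) * cmod (tensor (dil w1 \<psi>1) (dil w2 \<psi>2) y)) \<le> norm (K * indicator (P1 \<times> P2) y :: real)"
      by simp
  qed
  have "(\<integral>y. cmod (tensor (dil z1 \<psi>1) (dil z2 \<psi>2) y) * cmod (tensor (dil w1 \<psi>1) (dil w2 \<psi>2) y) \<partial>lborel)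
     \<le> (\<integral>y. K * indicator (P1 \<times> P2) y \<partial>lborel)"
    by (rule integral_mono[OF int intK pb])
  also have "\<dots> = K * measure lborel (P1 \<times> P2)" by simp
  also have "\<dots> = K * (measure lborel P1 * measure lborel P2)"
    using P1s fin1 fin2 by (simp add: measure_lborel_Times)
  also have "\<dots> = B1 * B1 * B2 * B2 * Qf z1 w1 * Qf z2 w2"
    unfolding K_def Qf_def P1_def P2_def by (simp add: ac_simps)
  finally show "(\<integral>y. cmod (tensor (dil z1 \<psi>1) (dil z2 \<psi>2) y) * cmod (tensor (dil w1 \<psi>1) (dil w2 \<psi>2) y) \<partial>lborel)
         \<le> B1 * B1 * B2 * B2 * Qf z1 w1 * Qf z2 w2" .
qed



lemma powr_alg: fixes m M a :: real assumes "0 < m" "m \<le> M"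
  shows "(m * M) powr (- a) * m powr (2 * a) = (m / M) powr a"
proof -
  have M: "M > 0" using assms by simp
  have "(m * M) powr (- a) * m powr (2 * a) = M powr (- a) * (m powr (- a) * m powr (2 * a))"
    using assms M by (simp add: powr_mult ac_simps)
  also have "m powr (- a) * m powr (2 * a) = m powr a" by (simp flip: powr_add)
  finally have "(m * M) powr (- a) * m powr (2 * a) = M powr (- a) * m powr a" .
  also have "\<dots> = m powr a / M powr a" by (simp add: powr_minus divide_inverse)
  also have "\<dots> = (m / M) powr a" using M assms by (simp add: powr_divide)
  finally show ?thesis .
qed

lemma measure_ball_inter_le:
  fixes x y :: "'a::euclidean_space"
  assumes "t > 0" "s > 0"
  shows "measure lborel (ball x t \<inter> ball y s) \<le> min t s ^ DIM('a) * measure lborel (ball (0::'a) 1)"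
proof -
  have "measure lborel (ball x t \<inter> ball y s) \<le> measure lborel (ball x t)"
    by (intro measure_mono_fmeasurable fmeasurableI emeasure_lborel_ball_finite) auto
  moreover have "measure lborel (ball x t \<inter> ball y s) \<le> measure lborel (ball y s)"
    by (intro measure_mono_fmeasurable fmeasurableI emeasure_lborel_ball_finite) auto
  ultimately show ?thesis
    using content_ball_conv_unit_ball[of t x] content_ball_conv_unit_ball[of s y] assms
    by (cases "t \<le> s") (auto simp: min_def)
qed

lemma Qf_nonneg: "Qf z w \<ge> 0" unfolding Qf_def by simp

lemma Qf_bound:
  fixes z w :: "'a::euclidean_space \<times> real"
  assumes "snd z > 0" "snd w > 0"
  shows "Qf z w \<le> measure lborel (ball (0::'a) 1) * sqrt (min (snd z) (snd w) / max (snd z) (snd w))"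
proof -
  define t s where "t = snd z" and "s = snd w"
  define m M where "m = min t s" and "M = max t s"
  define V where "V = measure lborel (ball (0::'a) 1)"
  define n where "n = real DIM('a)"
  have pos: "t > 0" "s > 0" using assms by (auto simp: t_def s_def)
  have mM: "0 < m" "m \<le> M" "t * s = m * M" using pos by (auto simp: m_def M_def min_def max_def)
  have V0: "V \<ge> 0" by (simp add: V_def)
  have n1: "n \<ge> 1" by (simp add: n_def Suc_leI)
  have "Qf z w \<le> (t * s) powr (- n / 2) * (m ^ DIM('a) * V)"
    unfolding Qf_def t_def s_def m_def V_def n_def
    using measure_ball_inter_le[OF assms] by (intro mult_left_mono) auto
  also have "m ^ DIM('a) = m powr (2 * (n / 2))" using mM by (simp add: powr_realpow n_def)
  also have "(t * s) powr (- n / 2) * (m powr (2 * (n / 2)) * V) = ((m * M) powr (- (n / 2)) * m powr (2 * (n / 2))) * V"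
    using mM by simp
  also have "\<dots> = (m / M) powr (n / 2) * V" using powr_alg[OF mM(1,2), of "n/2"] by simp
  also have "\<dots> \<le> (m / M) powr (1 / 2) * V"
    using mM n1 V0 by (intro mult_right_mono powr_mono') auto
  also have "\<dots> = V * sqrt (m / M)" using mM by (simp add: powr_half_sqrt)
  finally show ?thesis unfolding V_def m_def M_def t_def s_def .
qed

lemma Qf_disjoint:
  fixes z w :: "'a::euclidean_space \<times> real"
  assumes "dist (fst z) (fst w) \<ge> snd z + snd w"
  shows "Qf z w = 0"
proof -
  have "ball (fst z) (snd z) \<inter> ball (fst w) (snd w) = {}"
  proof (rule ccontr)
    assume "\<not> ?thesis"
    then obtain y where "dist (fst z) y < snd z" "dist (fst w) y < snd w" by auto
    then have "dist (fst z) (fst w) < snd z + snd w"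
      using dist_triangle_less_add[of "fst z" y "snd z" "fst w" "snd w"] by (simp add: dist_commute)
    then show False using assms by simp
  qed
  then show ?thesis unfolding Qf_def by simp
qed

lemma hball_far:
  fixes z :: "'a::euclidean_space \<times> real"
  assumes "z \<in> upper_half" "z \<notin> hball (0,1) (arcosh (1 + A))" "A \<ge> 0"
  shows "((norm (fst z))\<^sup>2 + (1 - snd z)\<^sup>2) / (2 * snd z) \<ge> A"
proof -
  define D where "D = ((norm (fst z))\<^sup>2 + (1 - snd z)\<^sup>2) / (2 * snd z)"
  have t: "snd z > 0" using assms(1) by (simp add: upper_half_def)
  have D0: "D \<ge> 0" unfolding D_def using t by simp
  have "\<not> hdist (0,1) z < arcosh (1 + A)" using assms(1,2) by (simp add: hball_def)
  moreover have "hdist (0,1) z = arcosh (1 + D)" unfolding hdist_def D_def by simp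
  ultimately have "\<not> arcosh (1 + D) < arcosh (1 + A)" by simp
  then have "\<not> 1 + D < 1 + A" using D0 assms(3) by simp
  then show ?thesis unfolding D_def by simp
qed

lemma Qf_far:
  fixes w :: "'a::euclidean_space \<times> real"
  assumes "snd w > 0" "\<delta> > 0"
  shows "\<exists>R'. \<forall>z\<in>upper_half. z \<notin> hball (0,1) R' \<longrightarrow> Qf z w \<le> \<delta>"
proof -
  define V where "V = measure lborel (ball (0::'a) 1)"
  have V0: "V \<ge> 0" by (simp add: V_def)
  define \<rho> where "\<rho> = min 1 ((\<delta> / (V + 1))\<^sup>2)"
  have \<rho>: "\<rho> > 0" "\<rho> \<le> 1" using assms V0 by (auto simp: \<rho>_def)
  have "sqrt \<rho> \<le> sqrt ((\<delta> / (V + 1))\<^sup>2)" unfolding \<rho>_def by (intro real_sqrt_le_mono) simp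
  also have "\<dots> = \<delta> / (V + 1)" using assms V0 by simp
  finally have "V * sqrt \<rho> \<le> V * (\<delta> / (V + 1))" using V0 by (intro mult_left_mono) auto
  also have "\<dots> \<le> \<delta>" using V0 assms by (simp add: field_simps)
  finally have V\<rho>: "V * sqrt \<rho> \<le> \<delta>" .
  define s x' where "s = snd w" and "x' = fst w"
  have s: "s > 0" using assms by (simp add: s_def)
  define A where "A = ((norm x' + s / \<rho> + s)\<^sup>2 + (s / \<rho> + 1)\<^sup>2) / (2 * \<rho> * s) + 1"
  have A0: "A \<ge> 0" unfolding A_def using \<rho> s by simp
  show ?thesis
  proof (intro exI[of _ "arcosh (1 + A)"] ballI impI)
    fix z :: "'a \<times> real"
    assume z: "z \<in> upper_half" "z \<notin> hball (0,1) (arcosh (1 + A))"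
    define t x where "t = snd z" and "x = fst z"
    have t: "t > 0" using z by (simp add: upper_half_def t_def)
    have DA: "((norm x)\<^sup>2 + (1 - t)\<^sup>2) / (2 * t) \<ge> A" using hball_far[OF z A0] by (simp add: t_def x_def)
    show "Qf z w \<le> \<delta>"
    proof (cases "min t s / max t s \<le> \<rho>")
      case True
      have "Qf z w \<le> V * sqrt (min t s / max t s)" using Qf_bound[of z w] t s assms by (simp add: V_def t_def s_def)
      also have "\<dots> \<le> V * sqrt \<rho>" using True V0 by (intro mult_left_mono) auto
      finally show ?thesis using V\<rho> by simp
    next
      case False
      have mm: "min t s / max t s \<le> 1" using t s by (simp add: min_def max_def)
      then have \<rho>1: "\<rho> < 1" using False by simp
      have tb: "t > \<rho> * s" "t < s / \<rho>"
      proof -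
        show "t > \<rho> * s"
        proof (cases "t \<le> s")
          case True
          then have "\<rho> < t / s" using False by (simp add: min_def max_def)
          then show ?thesis using s by (simp add: field_simps)
        next
          case False
          have "\<rho> * s \<le> 1 * s" using \<rho> s by (intro mult_right_mono) auto
          then show ?thesis using False by simp
        qed
        show "t < s / \<rho>"
        proof (cases "t \<le> s")
          case True
          have "t * \<rho> < t * 1" using \<rho>1 t by (intro mult_strict_left_mono) auto
          then have "t * \<rho> < s" using True by simp
          then show ?thesis using \<rho> by (simp add: field_simps)
        next
          case False
          then have "\<rho> < s / t" using \<open>\<not> min t s / max t s \<le> \<rho>\<close> by (simp add: min_def max_def)
          then show ?thesis using t \<rho> by (simp add: field_simps)
        qed
      qed
      have "(2 * \<rho> * s) * A \<le> (2 * t) * (((norm x)\<^sup>2 + (1 - t)\<^sup>2) / (2 * t))"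
        by (rule mult_mono) (use DA tb A0 \<rho> s t in auto)
      also have "\<dots> = (norm x)\<^sup>2 + (1 - t)\<^sup>2" using t by simp
      finally have e1: "2 * \<rho> * s * A \<le> (norm x)\<^sup>2 + (1 - t)\<^sup>2" .
      have "(1 - t)\<^sup>2 \<le> (s / \<rho> + 1)\<^sup>2"
        using tb t by (intro power2_le_iff_abs_le[THEN iffD2]) auto
      moreover have "2 * \<rho> * s * A = (norm x' + s / \<rho> + s)\<^sup>2 + (s / \<rho> + 1)\<^sup>2 + 2 * \<rho> * s"
        unfolding A_def using \<rho> s by (simp add: field_simps)
      moreover have "0 < 2 * \<rho> * s" using \<rho> s by simp
      ultimately have "(norm x' + s / \<rho> + s)\<^sup>2 < (norm x)\<^sup>2" using e1 by linarith
      then have "norm x' + s / \<rho> + s < norm x" by (rule power2_less_imp_less) simp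
      then have "dist x x' \<ge> t + s" using tb norm_triangle_ineq2[of x x'] by (simp add: dist_norm)
      then have "Qf z w = 0" by (intro Qf_disjoint) (simp add: t_def s_def x_def x'_def)
      then show ?thesis using assms by simp
    qed
  qed
qed



lemma sum_norm_sq:
  assumes "finite S" "\<And>i. i \<in> S \<Longrightarrow> f i \<in> L2"
  shows "(L2_norm (\<lambda>y. \<Sum>i\<in>S. f i y))\<^sup>2 \<le> (\<Sum>i\<in>S. \<Sum>j\<in>S. \<integral>y. cmod (f i y) * cmod (f j y) \<partial>lborel)"
proof -
  have int: "integrable lborel (\<lambda>y. cmod (f i y) * cmod (f j y))" if "i \<in> S" "j \<in> S" for i j
    using L2_prod_integrable assms that by blast
  have "(L2_norm (\<lambda>y. \<Sum>i\<in>S. f i y))\<^sup>2 = (\<integral>y. (cmod (\<Sum>i\<in>S. f i y))\<^sup>2 \<partial>lborel)"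
    by (rule L2_norm_sq)
  also have "\<dots> \<le> (\<integral>y. (\<Sum>i\<in>S. \<Sum>j\<in>S. cmod (f i y) * cmod (f j y)) \<partial>lborel)"
  proof (rule integral_mono)
    show "integrable lborel (\<lambda>y. (cmod (\<Sum>i\<in>S. f i y))\<^sup>2)"
      using L2D(2)[OF L2_sum[OF assms]] .
    show "integrable lborel (\<lambda>y. \<Sum>i\<in>S. \<Sum>j\<in>S. cmod (f i y) * cmod (f j y))"
      using int by (intro Bochner_Integration.integrable_sum) auto
    fix y
    have "cmod (\<Sum>i\<in>S. f i y) \<le> (\<Sum>i\<in>S. cmod (f i y))" by (rule norm_sum)
    then have "(cmod (\<Sum>i\<in>S. f i y))\<^sup>2 \<le> (\<Sum>i\<in>S. cmod (f i y))\<^sup>2" by (intro power_mono) auto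
    also have "\<dots> = (\<Sum>i\<in>S. \<Sum>j\<in>S. cmod (f i y) * cmod (f j y))"
      by (simp add: power2_eq_square sum_product)
    finally show "(cmod (\<Sum>i\<in>S. f i y))\<^sup>2 \<le> (\<Sum>i\<in>S. \<Sum>j\<in>S. cmod (f i y) * cmod (f j y))" .
  qed
  also have "\<dots> = (\<Sum>i\<in>S. \<Sum>j\<in>S. \<integral>y. cmod (f i y) * cmod (f j y) \<partial>lborel)"
    using int by (simp add: Bochner_Integration.integral_sum Bochner_Integration.integrable_sum)
  finally show ?thesis .
qed

lemma select_finite:
  fixes a :: "nat \<Rightarrow> nat \<Rightarrow> real" and e :: "nat \<Rightarrow> real"
  assumes "\<And>j. eventually (\<lambda>k. a j k \<le> \<delta>) sequentially" "eventually (\<lambda>k. e k \<le> \<eta>) sequentially"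
  shows "\<exists>S. finite S \<and> card S = N \<and> (\<forall>i\<in>S. e i \<le> \<eta>) \<and> (\<forall>i\<in>S. \<forall>j\<in>S. i < j \<longrightarrow> a i j \<le> \<delta>)"
proof (induction N)
  case 0 show ?case by (intro exI[of _ "{}"]) simp
next
  case (Suc N)
  then obtain S where S: "finite S" "card S = N" "\<forall>i\<in>S. e i \<le> \<eta>" "\<forall>i\<in>S. \<forall>j\<in>S. i < j \<longrightarrow> a i j \<le> \<delta>"
    by blast
  have "eventually (\<lambda>k. e k \<le> \<eta> \<and> (\<forall>i\<in>S. a i k \<le> \<delta> \<and> i < k)) sequentially"
    using assms(2) S(1) assms(1) by (intro eventually_conj eventually_ball_finite ballI eventually_gt_at_top) auto
  then obtain K where K: "\<And>n. n \<ge> K \<Longrightarrow> e n \<le> \<eta> \<and> (\<forall>i\<in>S. a i n \<le> \<delta> \<and> i < n)"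
    unfolding eventually_sequentially by blast
  define k where "k = K"
  have k: "e k \<le> \<eta>" "\<forall>i\<in>S. a i k \<le> \<delta> \<and> i < k" using K[of K] by (auto simp: k_def)
  have kS: "k \<notin> S" using k(2) by auto
  show ?case
  proof (intro exI[of _ "insert k S"] conjI)
    show "finite (insert k S)" using S by simp
    show "card (insert k S) = Suc N" using S kS by simp
    show "\<forall>i\<in>insert k S. e i \<le> \<eta>" using S k by simp
    show "\<forall>i\<in>insert k S. \<forall>j\<in>insert k S. i < j \<longrightarrow> a i j \<le> \<delta>"
    proof (intro ballI impI)
      fix i j assume ij: "i \<in> insert k S" "j \<in> insert k S" "i < j"
      show "a i j \<le> \<delta>"
      proof (cases "j = k")
        case True
        then have "i \<in> S" using ij by auto
        then show ?thesis using k(2) True by auto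
      next
        case False
        then have "j \<in> S" using ij by auto
        moreover have "i \<in> S" using ij \<open>j \<in> S\<close> k(2) by auto
        ultimately show ?thesis using S(4) ij by auto
      qed
    qed
  qed
qed



lemma hball_mono_out: "z \<notin> hball c R2 \<Longrightarrow> R1 \<le> R2 \<Longrightarrow> z \<notin> hball c R1"
  unfolding hball_def by auto

lemma hball_upper: "w \<in> hball z R \<Longrightarrow> w \<in> upper_half"
  unfolding hball_def by auto

lemma Qf_le_V:
  fixes z w :: "'a::euclidean_space \<times> real"
  assumes "snd z > 0" "snd w > 0"
  shows "Qf z w \<le> measure lborel (ball (0::'a) 1)"
proof -
  have "sqrt (min (snd z) (snd w) / max (snd z) (snd w)) \<le> 1"
    using assms by (auto simp: min_def max_def)
  then have "measure lborel (ball (0::'a) 1) * sqrt (min (snd z) (snd w) / max (snd z) (snd w)) \<le> measure lborel (ball (0::'a) 1) * 1"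
    by (intro mult_left_mono) auto
  then show ?thesis using Qf_bound[OF assms] by linarith
qed

lemma UH_pos: "z \<in> upper_half \<Longrightarrow> snd z > 0"
  by (simp add: upper_half_def)

theorem proposition2p3:
  fixes T :: "(('a::euclidean_space \<times> 'b::euclidean_space) \<Rightarrow> complex) \<Rightarrow> (('a \<times> 'b) \<Rightarrow> complex)"
    and \<psi>1 :: "'a \<Rightarrow> real" and \<psi>2 :: "'b \<Rightarrow> real" and R :: real
  assumes "admissible_wavelet \<psi>1" and "admissible_wavelet \<psi>2"
    and "linear_L2 T" and "compact_L2 T" and "R > 0"
  shows "\<forall>\<epsilon>>0. \<exists>R'. \<forall>z1\<in>upper_half. \<forall>z2\<in>upper_half.
           (z1 \<notin> hball (0, 1) R' \<or> z2 \<notin> hball (0, 1) R') \<longrightarrow>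
           (\<forall>w1\<in>hball z1 R. \<forall>w2\<in>hball z2 R.
              cmod (L2_inner (T (tensor (dil z1 \<psi>1) (dil z2 \<psi>2))) (tensor (dil w1 \<psi>1) (dil w2 \<psi>2))) \<le> \<epsilon>)"
proof (intro allI impI)
  fix \<epsilon> :: real assume \<epsilon>: "\<epsilon> > 0"
  note wv1 = assms(1) and wv2 = assms(2)
  obtain B1 where B1: "B1 \<ge> 0" "\<And>y. \<bar>\<psi>1 y\<bar> \<le> B1" using wavelet_bound[OF wv1] by blast
  obtain B2 where B2: "B2 \<ge> 0" "\<And>y. \<bar>\<psi>2 y\<bar> \<le> B2" using wavelet_bound[OF wv2] by blast
  define \<Phi> where "\<Phi> z1 z2 = tensor (dil z1 \<psi>1) (dil z2 \<psi>2)" for z1 z2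
  define V1 where "V1 = measure lborel (ball (0::'a) 1)"
  define V2 where "V2 = measure lborel (ball (0::'b) 1)"
  have V0: "V1 \<ge> 0" "V2 \<ge> 0" by (auto simp: V1_def V2_def)
  define K where "K = B1 * B1 * B2 * B2"
  have K0: "K \<ge> 0" using B1 B2 by (simp add: K_def)
  define M where "M = sqrt (K * V1 * V2)"
  have M0: "M \<ge> 0" using K0 V0 by (simp add: M_def)
  have Aint: "integrable lborel (\<lambda>y. cmod (\<Phi> z1 z2 y) * cmod (\<Phi> w1 w2 y))"
    and Ale: "(\<integral>y. cmod (\<Phi> z1 z2 y) * cmod (\<Phi> w1 w2 y) \<partial>lborel) \<le> K * Qf z1 w1 * Qf z2 w2"
    if "z1 \<in> upper_half" "z2 \<in> upper_half" "w1 \<in> upper_half" "w2 \<in> upper_half" for z1 z2 w1 w2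
    using A_bound[OF wv1 B1(2) wv2 B2(2) UH_pos[OF that(1)] UH_pos[OF that(2)] UH_pos[OF that(3)] UH_pos[OF that(4)]]
    unfolding \<Phi>_def K_def by auto
  have PhiL2: "\<Phi> z1 z2 \<in> L2" if "z1 \<in> upper_half" "z2 \<in> upper_half" for z1 z2
    using Aint[OF that that] Phi_meas[OF wv1 wv2, of z1 z2] unfolding L2_def \<Phi>_def
    by (simp add: power2_eq_square)
  have Pnorm: "L2_norm (\<Phi> z1 z2) \<le> M" if "z1 \<in> upper_half" "z2 \<in> upper_half" for z1 z2
  proof -
    have "(L2_norm (\<Phi> z1 z2))\<^sup>2 = (\<integral>y. cmod (\<Phi> z1 z2 y) * cmod (\<Phi> z1 z2 y) \<partial>lborel)"
      unfolding L2_norm_sq by (simp add: power2_eq_square)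
    also have "\<dots> \<le> K * Qf z1 z1 * Qf z2 z2" by (rule Ale[OF that that])
    also have "\<dots> \<le> K * V1 * V2"
      using Qf_le_V[of z1 z1] Qf_le_V[of z2 z2] UH_pos[OF that(1)] UH_pos[OF that(2)] K0 V0 Qf_nonneg[of z1 z1] Qf_nonneg[of z2 z2]
      unfolding V1_def V2_def by (intro mult_mono) auto
    finally show ?thesis unfolding M_def using L2_norm_nonneg by (simp add: real_le_rsqrt)
  qed
  have Afar: "\<exists>R0. \<forall>z1\<in>upper_half. \<forall>z2\<in>upper_half. (z1 \<notin> hball (0,1) R0 \<or> z2 \<notin> hball (0,1) R0) \<longrightarrow>
      (\<integral>y. cmod (\<Phi> z1 z2 y) * cmod (\<Phi> w1 w2 y) \<partial>lborel) \<le> \<delta>"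
    if w: "w1 \<in> upper_half" "w2 \<in> upper_half" and \<delta>: "\<delta> > 0" for w1 w2 \<delta>
  proof -
    define C where "C = (K + 1) * (V1 + 1) * (V2 + 1)"
    have "1 * 1 * 1 \<le> (K + 1) * (V1 + 1) * (V2 + 1)"
      using K0 V0 by (intro mult_mono) auto
    then have C1: "C \<ge> 1" unfolding C_def by simp
    have KV1: "K * V2 \<le> C" and KV2: "K * V1 \<le> C"
    proof -
      have "K * V2 \<le> (K + 1) * (V2 + 1)" using K0 V0 by (intro mult_mono) auto
      also have "\<dots> = (K + 1) * (V2 + 1) * 1" by simp
      also have "\<dots> \<le> (K + 1) * (V2 + 1) * (V1 + 1)" using K0 V0 by (intro mult_left_mono) auto
      finally show "K * V2 \<le> C" unfolding C_def by (simp add: ac_simps)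
      have "K * V1 \<le> (K + 1) * (V1 + 1)" using K0 V0 by (intro mult_mono) auto
      also have "\<dots> = (K + 1) * (V1 + 1) * 1" by simp
      also have "\<dots> \<le> (K + 1) * (V1 + 1) * (V2 + 1)" using K0 V0 by (intro mult_left_mono) auto
      finally show "K * V1 \<le> C" unfolding C_def by (simp add: ac_simps)
    qed
    define \<delta>' where "\<delta>' = \<delta> / C"
    have \<delta>': "\<delta>' > 0" "\<delta>' * C = \<delta>" using \<delta> C1 by (auto simp: \<delta>'_def)
    obtain R1 where R1: "\<forall>z\<in>upper_half. z \<notin> hball (0,1) R1 \<longrightarrow> Qf z w1 \<le> \<delta>'"
      using Qf_far[OF UH_pos[OF w(1)] \<delta>'(1)] by blast
    obtain R2 where R2: "\<forall>z\<in>upper_half. z \<notin> hball (0,1) R2 \<longrightarrow> Qf z w2 \<le> \<delta>'"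
      using Qf_far[OF UH_pos[OF w(2)] \<delta>'(1)] by blast
    show ?thesis
    proof (intro exI[of _ "max R1 R2"] ballI impI)
      fix z1 :: "'a \<times> real" and z2 :: "'b \<times> real" assume z: "z1 \<in> upper_half" "z2 \<in> upper_half"
        and out: "z1 \<notin> hball (0,1) (max R1 R2) \<or> z2 \<notin> hball (0,1) (max R1 R2)"
      have Q1: "0 \<le> Qf z1 w1" "Qf z1 w1 \<le> V1" and Q2: "0 \<le> Qf z2 w2" "Qf z2 w2 \<le> V2"
        using Qf_nonneg[of z1 w1] Qf_nonneg[of z2 w2] Qf_le_V[OF UH_pos[OF z(1)] UH_pos[OF w(1)]] Qf_le_V[OF UH_pos[OF z(2)] UH_pos[OF w(2)]]
        by (auto simp: V1_def V2_def)
      have "(\<integral>y. cmod (\<Phi> z1 z2 y) * cmod (\<Phi> w1 w2 y) \<partial>lborel) \<le> K * Qf z1 w1 * Qf z2 w2"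
        by (rule Ale[OF z w])
      also have "\<dots> \<le> \<delta>"
        using out
      proof
        assume "z1 \<notin> hball (0,1) (max R1 R2)"
        then have "z1 \<notin> hball (0,1) R1" by (rule hball_mono_out) simp
        then have "Qf z1 w1 \<le> \<delta>'" using R1 z(1) by blast
        then have "K * Qf z1 w1 * Qf z2 w2 \<le> K * \<delta>' * V2"
          using K0 Q1 Q2 \<delta>' by (intro mult_mono) auto
        also have "\<dots> = \<delta>' * (K * V2)" by simp
        also have "\<dots> \<le> \<delta>' * C" using KV1 \<delta>' by (intro mult_left_mono) auto
        finally show ?thesis using \<delta>' by simp
      next
        assume "z2 \<notin> hball (0,1) (max R1 R2)"
        then have "z2 \<notin> hball (0,1) R2" by (rule hball_mono_out) simp
        then have "Qf z2 w2 \<le> \<delta>'" using R2 z(2) by blast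
        then have "K * Qf z1 w1 * Qf z2 w2 \<le> K * V1 * \<delta>'"
          using K0 Q1 Q2 \<delta>' by (intro mult_mono) auto
        also have "\<dots> = \<delta>' * (K * V1)" by simp
        also have "\<dots> \<le> \<delta>' * C" using KV2 \<delta>' by (intro mult_left_mono) auto
        finally show ?thesis using \<delta>' by simp
      qed
      finally show "(\<integral>y. cmod (\<Phi> z1 z2 y) * cmod (\<Phi> w1 w2 y) \<partial>lborel) \<le> \<delta>" .
    qed
  qed
  obtain CT where CT: "CT \<ge> 0" "\<And>f. f \<in> L2 \<Longrightarrow> L2_norm (T f) \<le> CT * L2_norm f"
    using T_bounded[OF assms(3,4)] by blast
  have TL2: "\<And>f. f \<in> L2 \<Longrightarrow> T f \<in> L2" using assms(3) by (simp add: linear_L2_def)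
  show "\<exists>R'. \<forall>z1\<in>upper_half. \<forall>z2\<in>upper_half.
           (z1 \<notin> hball (0, 1) R' \<or> z2 \<notin> hball (0, 1) R') \<longrightarrow>
           (\<forall>w1\<in>hball z1 R. \<forall>w2\<in>hball z2 R.
              cmod (L2_inner (T (tensor (dil z1 \<psi>1) (dil z2 \<psi>2))) (tensor (dil w1 \<psi>1) (dil w2 \<psi>2))) \<le> \<epsilon>)"
    (is "\<exists>R'. ?P R'")
  proof (rule ccontr)
    assume neg: "\<not> (\<exists>R'. ?P R')"
    have "\<exists>z1 z2 w1 w2. z1 \<in> upper_half \<and> z2 \<in> upper_half \<and>
        (z1 \<notin> hball (0, 1) (real k) \<or> z2 \<notin> hball (0, 1) (real k)) \<and>
        w1 \<in> hball z1 R \<and> w2 \<in> hball z2 R \<and> cmod (L2_inner (T (\<Phi> z1 z2)) (\<Phi> w1 w2)) > \<epsilon>" for k :: nat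
    proof -
      have "\<not> ?P (real k)" using neg by blast
      then obtain z1 z2 where z: "z1 \<in> upper_half" "z2 \<in> upper_half"
        "z1 \<notin> hball (0, 1) (real k) \<or> z2 \<notin> hball (0, 1) (real k)"
        "\<not> (\<forall>w1\<in>hball z1 R. \<forall>w2\<in>hball z2 R.
              cmod (L2_inner (T (tensor (dil z1 \<psi>1) (dil z2 \<psi>2))) (tensor (dil w1 \<psi>1) (dil w2 \<psi>2))) \<le> \<epsilon>)"
        by blast
      then obtain w1 w2 where w: "w1 \<in> hball z1 R" "w2 \<in> hball z2 R"
        "\<not> cmod (L2_inner (T (tensor (dil z1 \<psi>1) (dil z2 \<psi>2))) (tensor (dil w1 \<psi>1) (dil w2 \<psi>2))) \<le> \<epsilon>"
        by blast
      show ?thesis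
        by (rule exI[of _ z1], rule exI[of _ z2], rule exI[of _ w1], rule exI[of _ w2])
           (use z w in \<open>simp add: not_le \<Phi>_def\<close>)
    qed
    then obtain Z1 Z2 W1 W2 where ZW: "\<And>k. Z1 k \<in> upper_half" "\<And>k. Z2 k \<in> upper_half"
        "\<And>k. Z1 k \<notin> hball (0, 1) (real k) \<or> Z2 k \<notin> hball (0, 1) (real k)"
        "\<And>k. W1 k \<in> hball (Z1 k) R" "\<And>k. W2 k \<in> hball (Z2 k) R"
        "\<And>k. cmod (L2_inner (T (\<Phi> (Z1 k) (Z2 k))) (\<Phi> (W1 k) (W2 k))) > \<epsilon>"
      by metis
    define f where "f k = \<Phi> (Z1 k) (Z2 k)" for k
    have fL2: "\<And>k. f k \<in> L2" unfolding f_def using PhiL2 ZW by auto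
    have fM: "\<And>k. L2_norm (f k) \<le> M" unfolding f_def using Pnorm ZW by auto
    have "(\<forall>k. f k \<in> L2) \<and> (\<exists>B. \<forall>k. L2_norm (f k) \<le> B)" using fL2 fM by blast
    from assms(4)[unfolded compact_L2_def, rule_format, OF this]
    obtain g r where g: "g \<in> L2" "strict_mono r" "(\<lambda>k. L2_norm (\<lambda>y. T (f (r k)) y - g y)) \<longlonglongrightarrow> 0"
      by blast
    define e where "e k = L2_norm (\<lambda>y. T (f (r k)) y - g y)" for k
    have e: "e \<longlonglongrightarrow> 0" using g(3) unfolding e_def .
    have e0: "e k \<ge> 0" for k unfolding e_def by (rule L2_norm_nonneg)
    have g0: "L2_norm g = 0"
    proof (rule ccontr)
      assume "L2_norm g \<noteq> 0"
      then have gp: "L2_norm g > 0" using L2_norm_nonneg[of g] by simp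
      define \<eta> where "\<eta> = L2_norm g / 2"
      have \<eta>: "\<eta> > 0" using gp by (simp add: \<eta>_def)
      define D where "D = 2 * M\<^sup>2 + 1"
      define N :: nat where "N = nat \<lceil>4 * CT\<^sup>2 * D / (L2_norm g)\<^sup>2\<rceil> + 1"
      have N1: "N \<ge> 1" by (simp add: N_def)
      have NN: "real N > 4 * CT\<^sup>2 * D / (L2_norm g)\<^sup>2" unfolding N_def by linarith
      define \<delta> where "\<delta> = (M\<^sup>2 + 1) / real N"
      have "M\<^sup>2 + 1 > 0" by (simp add: add_nonneg_pos)
      then have \<delta>: "\<delta> > 0" using N1 unfolding \<delta>_def by (intro divide_pos_pos) auto
      define a where "a i j = (\<integral>y. cmod (f (r i) y) * cmod (f (r j) y) \<partial>lborel)" for i j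
      have ev_a: "eventually (\<lambda>k. a j k \<le> \<delta>) sequentially" for j
      proof -
        obtain R0 where R0: "\<forall>z1\<in>upper_half. \<forall>z2\<in>upper_half. (z1 \<notin> hball (0,1) R0 \<or> z2 \<notin> hball (0,1) R0) \<longrightarrow>
            (\<integral>y. cmod (\<Phi> z1 z2 y) * cmod (\<Phi> (Z1 (r j)) (Z2 (r j)) y) \<partial>lborel) \<le> \<delta>"
          using Afar[OF ZW(1) ZW(2) \<delta>] by blast
        have "eventually (\<lambda>k. k \<ge> nat \<lceil>R0\<rceil>) sequentially" by (rule eventually_ge_at_top)
        then show ?thesis
        proof (rule eventually_mono)
          fix k assume k: "k \<ge> nat \<lceil>R0\<rceil>"
          have "R0 \<le> real k" using k by linarith
          also have "real k \<le> real (r k)" using seq_suble[OF g(2)] by simp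
          finally have Rk: "R0 \<le> real (r k)" .
          have out: "Z1 (r k) \<notin> hball (0,1) R0 \<or> Z2 (r k) \<notin> hball (0,1) R0"
            using ZW(3)[of "r k"] hball_mono_out[of "Z1 (r k)" "(0,1)" "real (r k)" R0]
              hball_mono_out[of "Z2 (r k)" "(0,1)" "real (r k)" R0] Rk by blast
          have "(\<integral>y. cmod (\<Phi> (Z1 (r k)) (Z2 (r k)) y) * cmod (\<Phi> (Z1 (r j)) (Z2 (r j)) y) \<partial>lborel) \<le> \<delta>"
            using R0 ZW(1,2) out by blast
          then show "a j k \<le> \<delta>" unfolding a_def f_def by (simp add: mult.commute)
        qed
      qed
      have ev_e: "eventually (\<lambda>k. e k \<le> \<eta>) sequentially"
        using order_tendstoD(2)[OF e \<eta>] by (rule eventually_mono) simp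
      obtain S where S: "finite S" "card S = N" "\<forall>i\<in>S. e i \<le> \<eta>" "\<forall>i\<in>S. \<forall>j\<in>S. i < j \<longrightarrow> a i j \<le> \<delta>"
        using select_finite[of a \<delta> e \<eta> N, OF ev_a ev_e] by blast
      define u where "u i = f (r i)" for i
      have uL2: "\<And>i. u i \<in> L2" unfolding u_def by (rule fL2)
      have TuL2: "\<And>i. T (u i) \<in> L2" using TL2 uL2 by blast
      define h where "h = (\<lambda>y. \<Sum>i\<in>S. u i y)"
      have hL2: "h \<in> L2" unfolding h_def using L2_sum[OF S(1)] uL2 by blast
      have aij: "a i j \<le> \<delta> + (if i = j then M\<^sup>2 else 0)" if "i \<in> S" "j \<in> S" for i j
      proof (cases "i = j")
        case True
        have "a i i = (L2_norm (u i))\<^sup>2" unfolding a_def L2_norm_sq u_def by (simp add: power2_eq_square)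
        also have "\<dots> \<le> M\<^sup>2" unfolding u_def using fM L2_norm_nonneg by (intro power_mono) auto
        finally show ?thesis using True \<delta> by simp
      next
        case False
        then have "i < j \<or> j < i" by arith
        then have "a i j \<le> \<delta>"
        proof
          assume "i < j" then show ?thesis using S(4) that by blast
        next
          assume "j < i" then have "a j i \<le> \<delta>" using S(4) that by blast
          moreover have "a i j = a j i" unfolding a_def by (simp add: mult.commute)
          ultimately show ?thesis by simp
        qed
        then show ?thesis using False by simp
      qed
      have "(L2_norm h)\<^sup>2 \<le> (\<Sum>i\<in>S. \<Sum>j\<in>S. a i j)"
        unfolding h_def a_def u_def using sum_norm_sq[OF S(1), of u] uL2 unfolding u_def by simp
      also have "\<dots> \<le> (\<Sum>i\<in>S. \<Sum>j\<in>S. \<delta> + (if i = j then M\<^sup>2 else 0))"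
        using aij by (intro sum_mono) auto
      also have "\<dots> = real N * (real N * \<delta> + M\<^sup>2)"
        using S(1,2) by (simp add: sum.distrib)
      also have "real N * \<delta> = M\<^sup>2 + 1" using N1 by (simp add: \<delta>_def)
      finally have hn: "(L2_norm h)\<^sup>2 \<le> real N * D" unfolding D_def by simp
      have Th: "T h = (\<lambda>y. \<Sum>i\<in>S. T (u i) y)" unfolding h_def by (rule T_sum[OF assms(3) S(1) uL2])
      define G where "G = (\<lambda>y. complex_of_nat N * g y)"
      have GL2: "G \<in> L2" unfolding G_def by (rule L2_scale[OF g(1)])
      have Gn: "L2_norm G = real N * L2_norm g" unfolding G_def using L2_norm_scale[OF g(1)] by simp
      have "(\<lambda>y. G y - T h y) = (\<lambda>y. \<Sum>i\<in>S. (g y - T (u i) y))"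
        unfolding G_def Th using S(1,2) by (simp add: sum_subtractf)
      then have "L2_norm (\<lambda>y. G y - T h y) \<le> (\<Sum>i\<in>S. L2_norm (\<lambda>y. g y - T (u i) y))"
        using L2_norm_sum[OF S(1), of "\<lambda>i y. g y - T (u i) y"] L2_diff[OF g(1) TuL2] by simp
      also have "\<dots> = (\<Sum>i\<in>S. e i)"
      proof (rule sum.cong)
        fix i assume "i \<in> S"
        have "(\<lambda>y. g y - T (u i) y) = (\<lambda>y. (-1) * (T (u i) y - g y))" by simp
        then show "L2_norm (\<lambda>y. g y - T (u i) y) = e i"
          using L2_norm_scale[OF L2_diff[OF TuL2 g(1)], of "-1"] unfolding e_def u_def by simp
      qed simp
      also have "\<dots> \<le> (\<Sum>i\<in>S. \<eta>)" using S(3) by (intro sum_mono) auto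
      also have "\<dots> = real N * \<eta>" using S(2) by simp
      finally have d1: "L2_norm (\<lambda>y. G y - T h y) \<le> real N * \<eta>" .
      have "real N * L2_norm g \<le> L2_norm (\<lambda>y. G y - T h y) + L2_norm (T h)"
        using L2_norm_le_diff[OF GL2 TL2[OF hL2]] Gn by simp
      also have "\<dots> \<le> real N * \<eta> + CT * L2_norm h" using d1 CT(2)[OF hL2] by simp
      finally have "real N * L2_norm g / 2 \<le> CT * L2_norm h" unfolding \<eta>_def by simp
      then have "(real N * L2_norm g / 2)\<^sup>2 \<le> (CT * L2_norm h)\<^sup>2"
        using gp by (intro power_mono) auto
      also have "\<dots> = CT\<^sup>2 * (L2_norm h)\<^sup>2" by (simp add: power_mult_distrib)
      also have "\<dots> \<le> CT\<^sup>2 * (real N * D)" using hn by (intro mult_left_mono) auto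
      finally have "real N * real N * (L2_norm g)\<^sup>2 \<le> real N * (4 * CT\<^sup>2 * D)"
        by (simp add: power2_eq_square field_simps)
      then have "real N * (L2_norm g)\<^sup>2 \<le> 4 * CT\<^sup>2 * D" using N1 by simp
      moreover have "real N * (L2_norm g)\<^sup>2 > 4 * CT\<^sup>2 * D"
        using NN gp by (simp add: field_simps)
      ultimately show False by simp
    qed
    have "eventually (\<lambda>k. e k < \<epsilon> / (M + 1)) sequentially"
      using e \<epsilon> M0 by (intro order_tendstoD(2)) auto
    then obtain k where k: "e k < \<epsilon> / (M + 1)" by (auto simp: eventually_sequentially)
    define j where "j = r k"
    have Wu: "W1 j \<in> upper_half" "W2 j \<in> upper_half" using ZW(4,5) hball_upper by blast+
    have PW: "\<Phi> (W1 j) (W2 j) \<in> L2" "L2_norm (\<Phi> (W1 j) (W2 j)) \<le> M" using PhiL2[OF Wu] Pnorm[OF Wu] by auto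
    have Tf: "T (f j) \<in> L2" using TL2 fL2 by blast
    have "cmod (L2_inner (T (f j)) (\<Phi> (W1 j) (W2 j)))
        \<le> cmod (L2_inner (\<lambda>y. T (f j) y - g y) (\<Phi> (W1 j) (W2 j))) + cmod (L2_inner g (\<Phi> (W1 j) (W2 j)))"
      using L2_inner_diff[OF Tf g(1) PW(1)] norm_triangle_ineq by metis
    also have "\<dots> \<le> e k * L2_norm (\<Phi> (W1 j) (W2 j)) + L2_norm g * L2_norm (\<Phi> (W1 j) (W2 j))"
      using L2_inner_bound[OF L2_diff[OF Tf g(1)] PW(1)] L2_inner_bound[OF g(1) PW(1)]
      unfolding e_def j_def by (intro add_mono) auto
    also have "\<dots> \<le> e k * M" using g0 PW(2) e0 by (simp add: mult_left_mono)
    also have "\<dots> \<le> e k * (M + 1)" using e0 by (intro mult_left_mono) auto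
    also have "\<dots> < \<epsilon>" using k M0 by (simp add: field_simps)
    finally show False using ZW(6)[of j] unfolding f_def by simp
  qed
qed

end
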